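(* Let $p$ be an odd prime and $n$ an odd positive integer, and let $d=\frac{p^n+1}{p+1}$. Then the power function $F(x)=x^d$ on $\mathrm{GF}(p^n)$ is perfect $c$-nonlinear for $c=-1$.
   Context: For a function $F:\mathrm{GF}(p^n)\to\mathrm{GF}(p^n)$ and $a,b,c\in\mathrm{GF}(p^n)$, let ${}_c\Delta_F(a,b)=\#\{x\in\mathrm{GF}(p^n): F(x+a)-cF(x)=b\}$. The $c$-differential uniformity of $F$ is ${}_c\Delta_F=\max\{{}_c\Delta_F(a,b): a,b\in\mathrm{GF}(p^n),\ \text{and } a\neq 0 \text{ if } c=1\}$. $F$ is perfect $c$-nonlinear (P$c$N) if ${}_c\Delta_F=1$. *)

theory Defs
  imports Main "HOL-Computational_Algebra.Primes"
begin

text \<open>The finite field GF(p^n) is modelled as a type 'a of class field and finite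
  with CARD('a) = p^n (such a field is unique up to isomorphism).\<close>

definition c_diff_count :: "('a::field \<Rightarrow> 'a) \<Rightarrow> 'a \<Rightarrow> 'a \<Rightarrow> 'a \<Rightarrow> nat" where
  "c_diff_count F c a b = card {x. F (x + a) - c * F x = b}"

definition c_diff_uniformity :: "('a::{field,finite} \<Rightarrow> 'a) \<Rightarrow> 'a \<Rightarrow> nat" where
  "c_diff_uniformity F c =
     Max {c_diff_count F c a b | a b. c = 1 \<longrightarrow> a \<noteq> 0}"

definition perfect_c_nonlinear :: "('a::{field,finite} \<Rightarrow> 'a) \<Rightarrow> 'a \<Rightarrow> bool" where
  "perfect_c_nonlinear F c \<longleftrightarrow> c_diff_uniformity F c = 1"

end

theory Submission
  imports Defs "HOL-Computational_Algebra.Computational_Algebra" "HOL-Number_Theory.Residues"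
begin


lemma geom_nat: "(p - 1) * (\<Sum>i<n. p ^ i) + 1 = (p::nat) ^ n" if "p \<ge> 1"
proof (induction n)
  case 0 then show ?case by simp
next
  case (Suc n)
  have "(p - 1) * (\<Sum>i<Suc n. p ^ i) + 1 = ((p - 1) * (\<Sum>i<n. p ^ i) + 1) + (p - 1) * p ^ n"
    by (simp add: algebra_simps)
  also have "\<dots> = p^n + (p-1) * p^n" using Suc by simp
  also have "\<dots> = p * p^n" using that by (cases p) (auto simp: algebra_simps)
  finally show ?case by simp
qed

lemma odd_geom: "odd (\<Sum>i<n. (p::nat) ^ i) \<longleftrightarrow> odd n" if "odd p"
  by (induction n) (use that in auto)

lemma alt_sum: "(int p)^n + 1 = (int p + 1) * (\<Sum>i<n. (- int p)^i)" if "odd n"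
proof -
  have "(- int p) ^ n - 1 = (- int p - 1) * (\<Sum>i<n. (- int p)^i)"
    by (rule power_diff_1_eq)
  moreover have "(- int p) ^ n = - (int p ^ n)" using that by simp
  ultimately show ?thesis by (simp add: algebra_simps)
qed

lemma odd_alt_sum: "odd (\<Sum>i<n. (- int p)^i) \<longleftrightarrow> odd n" if "odd p"
  by (induction n) (use that in auto)



locale ctx =
  fixes p n :: nat and ty :: "'a::{field,finite} itself"
  assumes prime_p: "prime p" and odd_p: "odd p" and odd_n: "odd n"
    and card_a: "card (UNIV :: 'a set) = p ^ n"
begin

definition "q = p ^ n"
definition "d = (q + 1) div (p + 1)"
definition "e = (q + p) div 2"
definition "k = (p - 1) div 2"
definition "K = (q - 1) div 2"
definition "jj = (\<Sum>i<n. p ^ i)"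

lemma p_ge3: "p \<ge> 3"
proof -
  have "p \<ge> 2" using prime_p prime_ge_2_nat by blast
  moreover have "p \<noteq> 2" using odd_p by auto
  ultimately show ?thesis by simp
qed

lemma p_eq: "p = 2 * k + 1"
  using odd_p unfolding k_def by presburger

lemma q_jj: "q = (p - 1) * jj + 1"
  unfolding q_def jj_def using geom_nat[of p n] p_ge3 by simp

lemma odd_jj: "odd jj"
  unfolding jj_def using odd_geom[OF odd_p] odd_n by simp

lemma pk: "p - 1 = 2 * k"
  using p_eq by simp

lemma K_eq: "K = k * jj"
  unfolding K_def using q_jj pk by simp

lemma q_K: "q = 2 * K + 1"
  using q_jj pk K_eq by simp

lemma d_prop: "(p + 1) * d = q + 1 \<and> odd d"
proof -
  obtain S where S: "S = (\<Sum>i<n. (- int p)^i)" by blast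
  have h1: "int q + 1 = (int p + 1) * S" using alt_sum[OF odd_n] S unfolding q_def by simp
  have h2: "odd S" using odd_alt_sum[OF odd_p] odd_n S by simp
  have "S > 0"
  proof (rule ccontr)
    assume "\<not> S > 0"
    then have "(int p + 1) * S \<le> 0" by (simp add: mult_nonneg_nonpos)
    with h1 show False by simp
  qed
  then have "int (q + 1) = int ((p + 1) * nat S)" using h1 by (simp add: algebra_simps)
  then have "q + 1 = (p + 1) * nat S" by (simp only: of_nat_eq_iff)
  then have "d = ((p + 1) * nat S) div (p + 1)" unfolding d_def by (simp only:)
  then have "d = nat S" by (metis add_gr_0 nonzero_mult_div_cancel_left zero_less_one less_not_refl2)
  with \<open>q + 1 = (p + 1) * nat S\<close> h2 \<open>S > 0\<close> show ?thesis
    by (simp add: even_nat_iff)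
qed

lemma d_eq: "(p + 1) * d = q + 1" and odd_d: "odd d"
  using d_prop by auto

lemma hd: "(k + 1) * d = K + 1"
proof -
  have "2 * ((k + 1) * d) = 2 * (K + 1)"
    using d_eq q_K by (subst (asm) p_eq) (simp add: algebra_simps)
  then show ?thesis by simp
qed

lemma e_eq: "e = K + k + 1"
  unfolding e_def using q_K p_eq by simp

lemma odd_e: "odd e"
proof -
  have "e = k * (jj + 1) + 1" using e_eq K_eq by (simp add: algebra_simps)
  moreover have "even (jj + 1)" using odd_jj by simp
  ultimately show ?thesis by simp
qed

lemma two_e: "2 * e = q + p"
  using e_eq q_K p_eq by simp

lemma de: "d * e = ((d + 1) div 2) * (q - 1) + 1"
proof -
  have "d * e = d * K + (K + 1)" using e_eq hd by (simp add: algebra_simps)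
  also have "\<dots> = (d + 1) * K + 1" by (simp add: algebra_simps)
  also have "(d + 1) * K = ((d + 1) div 2) * (q - 1)"
  proof -
    obtain m where "d + 1 = 2 * m" using odd_d by (metis dvd_def odd_even_add odd_one)
    then show ?thesis using q_K by simp
  qed
  finally show ?thesis .
qed

end


context ctx
begin

lemma CHAR_eq: "CHAR('a) = p"
proof -
  have fin: "finite (UNIV::'a set)" by simp
  have "CHAR('a) > 0" using finite_imp_CHAR_pos[OF fin] .
  then have pr: "prime CHAR('a)" by (rule prime_CHAR_semidom)
  have "CHAR('a) dvd p ^ n" using CHAR_dvd_CARD[where 'a='a] card_a by simp
  then have "CHAR('a) dvd p" using pr prime_dvd_power by blast
  then show ?thesis using pr prime_p primes_dvd_imp_eq by blast
qed

lemma of_nat_eq0: "(of_nat m :: 'a) = 0 \<longleftrightarrow> p dvd m"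
  using of_nat_eq_0_iff_char_dvd[where 'a='a] CHAR_eq by simp

lemma two_ne0: "(2::'a) \<noteq> 0"
proof
  assume "(2::'a) = 0"
  then have "(of_nat 2 :: 'a) = 0" by simp
  then have "p dvd 2" using of_nat_eq0 by blast
  then have "p \<le> 2" by (simp add: dvd_imp_le)
  then show False using p_ge3 by simp
qed

lemma neg1_ne1: "(-1::'a) \<noteq> 1"
proof
  assume "(-1::'a) = 1"
  then have "(1::'a) + 1 = 0" by (metis add.right_inverse)
  then have "(2::'a) = 0" by (simp add: one_add_one)
  with two_ne0 show False by simp
qed

lemma frob: "(x + y :: 'a)^p = x^p + y^p"
  by (rule freshmans_dream) (simp_all add: CHAR_eq prime_p)

lemma frob_neg: "(- x :: 'a)^p = - (x^p)"
  using odd_p by (simp add: power_minus_odd)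

lemma frob_diff: "(x - y :: 'a)^p = x^p - y^p"
  using frob[of x "-y"] frob_neg[of y] by simp

lemma q_ge3: "q \<ge> 3"
proof -
  have "n \<ge> 1" using odd_n by (cases n) auto
  then have "p ^ 1 \<le> p ^ n" using p_ge3 by (intro power_increasing) auto
  then show ?thesis using p_ge3 unfolding q_def by simp
qed

lemma K_ge1: "K \<ge> 1" using q_K q_ge3 by simp

lemma pow_card: "(x::'a) ^ q = x"
proof (cases "x = 0")
  case False
  have "x * (\<Prod>y\<in>UNIV-{0}. x * y) = x * x ^ (card (UNIV :: 'a set) - 1) * \<Prod>(UNIV-{0})"
    by (simp add: prod.distrib mult_ac)
  also have "x * x ^ (card (UNIV :: 'a set) - 1) = x ^ Suc (card (UNIV :: 'a set) - 1)"
    by (subst power_Suc) auto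
  also have "Suc (card (UNIV :: 'a set) - 1) = card (UNIV :: 'a set)"
    using finite_UNIV_card_ge_0[where ?'a = 'a] by simp
  also have "(\<Prod>y\<in>UNIV-{0}. x * y) = (\<Prod>y\<in>UNIV-{0}. y)"
    by (rule prod.reindex_bij_witness[of _ "\<lambda>y. y / x" "\<lambda>y. x * y"]) (use False in auto)
  finally show ?thesis
    using card_a q_def by simp
qed (use q_ge3 in auto)

lemma pow_q1: "(x::'a) \<noteq> 0 \<Longrightarrow> x ^ (q - 1) = 1"
proof -
  assume x: "x \<noteq> 0"
  have "x * x ^ (q - 1) = x ^ Suc (q - 1)" by simp
  also have "Suc (q - 1) = q" using q_ge3 by simp
  finally have "x * x ^ (q - 1) = x * 1" using pow_card by simp
  then show ?thesis using x by simp
qed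

lemma sq_e: "((w::'a)^2)^e = w^(p+1)"
proof -
  have "(w^2)^e = w^(q + p)" using two_e by (simp add: power_mult[symmetric])
  also have "\<dots> = w^q * w^p" by (simp add: power_add)
  also have "\<dots> = w^(p+1)" using pow_card by simp
  finally show ?thesis .
qed

lemma pow_de: "((x::'a)^d)^e = x"
proof (cases "x = 0")
  case True
  have "d * e > 0" using odd_d odd_e by (simp add: odd_pos)
  then show ?thesis using True by (simp add: power_mult[symmetric])
next
  case False
  have "(x^d)^e = x ^ (((d + 1) div 2) * (q - 1) + 1)" using de by (simp add: power_mult[symmetric])
  also have "\<dots> = (x ^ (q - 1)) ^ ((d + 1) div 2) * x" by (simp add: power_add power_mult mult.commute)
  also have "\<dots> = x" using pow_q1[OF False] by simp
  finally show ?thesis .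
qed

lemma pow_d_inj: "(x::'a)^d = y^d \<Longrightarrow> x = y"
  by (metis pow_de)

lemma exists_nu: "\<exists>v::'a. v ^ K = -1"
proof -
  define P where "P = Polynomial.monom (1::'a) K + [:-1:]"
  have degP: "degree P = K" unfolding P_def using K_ge1
    by (subst degree_add_eq_left) (simp_all add: degree_monom_eq)
  have "P \<noteq> 0" using degP K_ge1 by auto
  then have c1: "card {x. poly P x = 0} \<le> K" using card_poly_roots_bound degP by metis
  have set: "{x. poly P x = 0} = {x::'a. x ^ K = 1}" unfolding P_def by (simp add: poly_monom)
  have "card (UNIV - {0::'a}) = q - 1" using card_a q_def by (simp add: card_Diff_singleton)
  then have "card (UNIV - {0::'a}) > K" using q_K K_ge1 by simp
  have "\<not> (UNIV - {0::'a}) \<subseteq> {x. x ^ K = 1}"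
  proof
    assume "(UNIV - {0::'a}) \<subseteq> {x. x ^ K = 1}"
    then have "card (UNIV - {0::'a}) \<le> card {x::'a. x ^ K = 1}" by (intro card_mono) auto
    with c1 set \<open>card (UNIV - {0::'a}) > K\<close> show False by simp
  qed
  then obtain v :: 'a where v: "v \<noteq> 0" "v ^ K \<noteq> 1" by auto
  have "(v ^ K) ^ 2 = 1" using pow_q1[OF v(1)] q_K by (simp add: power_mult[symmetric] mult.commute)
  then have "(v ^ K - 1) * (v ^ K + 1) = 0" by (simp add: algebra_simps power2_eq_square)
  then have "v ^ K = -1" using v(2) by (simp add: add_eq_0_iff2)
  then show ?thesis by blast
qed

definition "nu = (SOME v::'a. v ^ K = -1)"

lemma nu_K: "nu ^ K = -1"
  unfolding nu_def using exists_nu by (rule someI_ex)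

lemma nu_ne0: "nu \<noteq> 0"
proof
  assume "nu = 0"
  then have "(0::'a) = -1" using nu_K K_ge1 by (metis power_0_left not_one_le_zero)
  then have "(1::'a) = 0" by (metis minus_zero minus_minus)
  then show False by simp
qed

lemma nu_nsq: "nu \<noteq> w ^ 2"
proof
  assume h: "nu = w ^ 2"
  then have "w \<noteq> 0" using nu_ne0 by auto
  then have "nu ^ K = 1" using h pow_q1 q_K by (simp add: power_mult[symmetric])
  then show False using nu_K neg1_ne1 by simp
qed

lemma nu_e: "nu ^ e = - (nu * nu ^ k)"
  using e_eq nu_K by (simp add: power_add)

lemma nu_hd: "(nu * nu ^ k) ^ d = - nu"
proof -
  have "nu * nu ^ k = nu ^ (k + 1)" by simp
  then have "(nu * nu ^ k) ^ d = nu ^ ((k + 1) * d)" by (simp only: power_mult)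
  also have "\<dots> = nu ^ (K + 1)" using hd by simp
  finally show ?thesis using nu_K by simp
qed

lemma nu_p: "nu ^ p = nu * (nu ^ k) ^ 2"
  using p_eq by (metis power_Suc power_mult mult.commute Suc_eq_plus1)

end


context ctx
begin

lemma classify: "\<exists>w. (u::'a) = w^2 \<or> u = nu * w^2"
proof -
  define Sq where "Sq = (\<lambda>w::'a. w^2) ` (UNIV - {0})"
  have Sq0: "0 \<notin> Sq" unfolding Sq_def by auto
  have U: "UNIV - {0} = (\<Union>s\<in>Sq. {w::'a. w^2 = s})" unfolding Sq_def by auto
  have fib: "card {w::'a. w^2 = s} \<le> 2" if sS: "s \<in> Sq" for s
  proof -
    obtain r where r: "s = r^2" using sS Sq_def by auto
    have "{w::'a. w^2 = s} \<subseteq> {r, -r}" using r by (auto simp: power2_eq_iff)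
    then have "card {w::'a. w^2 = s} \<le> card {r, -r}" by (intro card_mono) auto
    also have "\<dots> \<le> 2" by (simp add: card_insert_le_m1)
    finally show ?thesis .
  qed
  have cardU: "card (UNIV - {0::'a}) = q - 1" using card_a q_def by (simp add: card_Diff_singleton)
  have "q - 1 \<le> (\<Sum>s\<in>Sq. card {w::'a. w^2 = s})" using U cardU card_UN_le[of Sq "\<lambda>s. {w::'a. w^2 = s}"]
    by simp
  also have "\<dots> \<le> (\<Sum>s\<in>Sq. 2)" by (rule sum_mono) (use fib in auto)
  also have "\<dots> = 2 * card Sq" by simp
  finally have c1: "q - 1 \<le> 2 * card Sq" .
  define N where "N = (\<lambda>s. nu * s) ` Sq"
  have cN: "card N = card Sq" unfolding N_def
    by (rule card_image) (use nu_ne0 in \<open>auto simp: inj_on_def\<close>)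
  have disj: "Sq \<inter> N = {}"
  proof (rule ccontr)
    assume "Sq \<inter> N \<noteq> {}"
    then obtain w r where w: "w \<noteq> 0" "r \<noteq> 0" "w^2 = nu * r^2" unfolding N_def Sq_def by auto
    then have "nu = (w / r)^2" by (simp add: power_divide)
    then show False using nu_nsq by blast
  qed
  have sub: "Sq \<union> N \<subseteq> UNIV - {0}" unfolding N_def Sq_def using nu_ne0 by auto
  have "card (Sq \<union> N) = 2 * card Sq" using disj cN by (simp add: card_Un_disjoint)
  then have "card (UNIV - {0::'a}) \<le> card (Sq \<union> N)" using c1 cardU by simp
  then have eq: "Sq \<union> N = UNIV - {0}" using sub by (intro card_seteq) auto
  show ?thesis
  proof (cases "u = 0")
    case True then show ?thesis by (intro exI[of _ 0]) simp
  next
    case False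
    then have "u \<in> Sq \<union> N" using eq by auto
    then show ?thesis unfolding Sq_def N_def by auto
  qed
qed

lemma pow_pm1: "(x::'a) \<noteq> 0 \<Longrightarrow> x ^ (p - 1) = c \<Longrightarrow> c ^ jj = 1"
  by (metis pow_q1 q_jj power_mult diff_add_inverse2)

lemma odd_pow_pm1: "(c::'a)^2 = 1 \<Longrightarrow> odd m \<Longrightarrow> c ^ m = c"
proof -
  assume "c^2 = 1" "odd m"
  then obtain r where "m = 2 * r + 1" by (metis oddE)
  then show ?thesis using \<open>c^2 = 1\<close> by (simp add: power_mult)
qed

lemma L1: "(x::'a) \<noteq> 0 \<Longrightarrow> x ^ (p - 1) = c \<Longrightarrow> c^2 = 1 \<Longrightarrow> c = 1"
  using pow_pm1 odd_pow_pm1 odd_jj by metis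

lemma L2: "(x::'a) \<noteq> 0 \<Longrightarrow> nu ^ k * x ^ (p - 1) = c \<Longrightarrow> c^2 = 1 \<Longrightarrow> c = -1"
proof -
  assume x: "x \<noteq> 0" and h: "nu ^ k * x ^ (p - 1) = c" and c: "c^2 = 1"
  have "c ^ jj = (nu ^ k * x ^ (p - 1)) ^ jj" using h by simp
  also have "\<dots> = nu ^ (k * jj) * x ^ ((p - 1) * jj)" by (simp only: power_mult_distrib power_mult)
  also have "x ^ ((p - 1) * jj) = 1" using pow_q1[OF x] q_jj by simp
  also have "nu ^ (k * jj) = -1" using nu_K K_eq by simp
  finally have "c ^ jj = -1" by simp
  then show ?thesis using odd_pow_pm1[OF c odd_jj] by simp
qed

definition "Ge (y::'a) = (y + 1) ^ e + y ^ e"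
definition "CC a b = a ^ (p + 1) - nu * nu ^ k * b ^ (p + 1)"
definition "WW a b = nu ^ k * a * b ^ p - a ^ p * b"

lemma mixed_rel:
  assumes "a^2 - nu * b^2 = \<epsilon>" "\<epsilon>^2 = 1"
  shows "a ^ p = \<epsilon> * (CC a b * a + nu * WW a b * b)"
    and "nu ^ k * b ^ p = \<epsilon> * (CC a b * b + WW a b * a)"
    and "(CC a b)^2 - nu * (WW a b)^2 = 1"
proof -
  define P where "P = a ^ p"
  define B where "B = b ^ p"
  define N where "N = nu ^ k"
  have C: "CC a b = P * a - nu * N * B * b" unfolding CC_def P_def B_def N_def by (simp add: mult_ac)
  have W: "WW a b = N * a * B - P * b" unfolding WW_def P_def B_def N_def by simp
  have "CC a b * a + nu * WW a b * b = P * (a^2 - nu * b^2)" unfolding C W by (simp add: algebra_simps power2_eq_square)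
  then have "\<epsilon> * (CC a b * a + nu * WW a b * b) = \<epsilon>^2 * P" using assms(1) by (simp add: power2_eq_square mult_ac)
  then show "a ^ p = \<epsilon> * (CC a b * a + nu * WW a b * b)" using assms(2) P_def by simp
  have "CC a b * b + WW a b * a = N * B * (a^2 - nu * b^2)" unfolding C W by (simp add: algebra_simps power2_eq_square)
  then have "\<epsilon> * (CC a b * b + WW a b * a) = \<epsilon>^2 * (N * B)" using assms(1) by (simp add: power2_eq_square mult_ac)
  then show "nu ^ k * b ^ p = \<epsilon> * (CC a b * b + WW a b * a)" using assms(2) N_def B_def by simp
  have fr: "P^2 - nu * N^2 * B^2 = \<epsilon> ^ p"
  proof -
    have "\<epsilon> ^ p = (a^2)^p - (nu * b^2)^p" using assms(1) frob_diff by metis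
    also have "\<dots> = P^2 - nu ^ p * B^2" unfolding P_def B_def by (simp add: power_mult_distrib power_mult[symmetric] mult.commute)
    finally show ?thesis using nu_p N_def by simp
  qed
  have ep: "\<epsilon> ^ p = \<epsilon>" using odd_pow_pm1[OF assms(2) odd_p] .
  have "(CC a b)^2 - nu * (WW a b)^2 = (P^2 - nu * N^2 * B^2) * (a^2 - nu * b^2)"
    unfolding C W by (simp add: algebra_simps power2_eq_square)
  also have "\<dots> = \<epsilon> * \<epsilon>" using fr ep assms(1) by simp
  finally show "(CC a b)^2 - nu * (WW a b)^2 = 1" using assms(2) by (simp add: power2_eq_square)
qed

definition "MW y a b \<epsilon> \<longleftrightarrow> \<epsilon>^2 = 1 \<and> a^2 - nu * b^2 = \<epsilon> \<and> a^2 + nu * b^2 = 2 * y + 1 \<and> Ge y = CC a b"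
definition "PW y U V \<longleftrightarrow> U * V = 1 \<and> 2 * Ge y = U + V \<and> U ^ d + V ^ d = 4 * y + 2"

end


context ctx
begin

lemma e_ne0: "e \<noteq> 0" using odd_pos[OF odd_e] by simp

lemma Ge0: "Ge 0 = 1"
  unfolding Ge_def using e_ne0 by simp

lemma Gem1: "Ge (-1) = -1"
  unfolding Ge_def using e_ne0 odd_e by simp

lemma four_ne0: "(4::'a) \<noteq> 0"
proof -
  have "(2::'a) * 2 \<noteq> 0" by (rule no_zero_divisors[OF two_ne0 two_ne0])
  then show ?thesis by simp
qed

lemma witness: "(\<exists>U V. PW y U V) \<or> (\<exists>a b \<epsilon>. MW y a b \<epsilon>)"
proof -
  obtain \<alpha> where ha: "y + 1 = \<alpha>^2 \<or> y + 1 = nu * \<alpha>^2" using classify by blast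
  obtain \<gamma> where hg: "y = \<gamma>^2 \<or> y = nu * \<gamma>^2" using classify by blast
  define t where "t = \<alpha> - \<gamma>"
  define s where "s = \<alpha> + \<gamma>"
  define \<mu> where "\<mu> = nu * nu ^ k"
  have tps: "t ^ (p + 1) + s ^ (p + 1) = 2 * (\<alpha> ^ (p + 1) + \<gamma> ^ (p + 1))"
  proof -
    have "t ^ (p + 1) = (\<alpha>^p - \<gamma>^p) * (\<alpha> - \<gamma>)" unfolding t_def using frob_diff by simp
    moreover have "s ^ (p + 1) = (\<alpha>^p + \<gamma>^p) * (\<alpha> + \<gamma>)" unfolding s_def using frob by simp
    ultimately show ?thesis by (simp add: algebra_simps)
  qed
  have td: "(x ^ (p + 1)) ^ d = x^2" for x :: 'a
  proof -
    have "(x ^ (p + 1)) ^ d = x ^ ((p + 1) * d)" by (rule power_mult[symmetric])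
    also have "\<dots> = x ^ (q + 1)" by (simp only: d_eq)
    also have "\<dots> = x^2" using pow_card by (simp add: power2_eq_square)
    finally show ?thesis .
  qed
  have ts2: "t^2 + s^2 = 2 * (\<alpha>^2 + \<gamma>^2)" unfolding t_def s_def by (simp add: algebra_simps power2_eq_square)
  have mu2: "\<mu>^2 = nu ^ (p + 1)" unfolding \<mu>_def using nu_p by (simp add: power2_eq_square mult_ac)
  have ntsm: "(nu * \<alpha>^2) ^ e = - \<mu> * \<alpha> ^ (p+1)" for \<alpha> :: 'a
    unfolding \<mu>_def by (simp add: power_mult_distrib sq_e nu_e)
  consider "y + 1 = \<alpha>^2" "y = \<gamma>^2" | "y + 1 = nu * \<alpha>^2" "y = nu * \<gamma>^2"
    | "y + 1 = \<alpha>^2" "y = nu * \<gamma>^2" | "y + 1 = nu * \<alpha>^2" "y = \<gamma>^2" using ha hg by blast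
  then show ?thesis
  proof cases
    case 1
    have "t * s = 1" unfolding t_def s_def using 1 by (simp add: algebra_simps power2_eq_square)
    have "PW y (t ^ (p+1)) (s ^ (p+1))"
      unfolding PW_def
    proof (intro conjI)
      show "t ^ (p + 1) * s ^ (p + 1) = 1" using \<open>t * s = 1\<close> by (metis power_mult_distrib power_one)
      show "2 * Ge y = t ^ (p + 1) + s ^ (p + 1)" using tps 1 unfolding Ge_def by (simp add: sq_e)
      have a2: "\<alpha>^2 = \<gamma>^2 + 1" using 1 by simp
      have "(t ^ (p + 1)) ^ d + (s ^ (p + 1)) ^ d = t^2 + s^2" using td by simp
      also have "\<dots> = 2 * (\<alpha>^2 + \<gamma>^2)" by (rule ts2)
      also have "\<dots> = 4 * y + 2" by (simp add: a2 1(2) algebra_simps)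
      finally show "(t ^ (p + 1)) ^ d + (s ^ (p + 1)) ^ d = 4 * y + 2" .
    qed
    then show ?thesis by blast
  next
    case 2
    have "nu * t * s = 1" unfolding t_def s_def using 2
      by (simp add: algebra_simps power2_eq_square)
    have "PW y (- \<mu> * t ^ (p+1)) (- \<mu> * s ^ (p+1))"
      unfolding PW_def
    proof (intro conjI)
      have "(- \<mu> * t ^ (p+1)) * (- \<mu> * s ^ (p+1)) = \<mu>^2 * (t * s) ^ (p + 1)"
        by (simp add: power_mult_distrib power2_eq_square)
      also have "\<dots> = (nu * t * s) ^ (p + 1)" using mu2 by (simp add: power_mult_distrib)
      finally show "(- \<mu> * t ^ (p+1)) * (- \<mu> * s ^ (p+1)) = 1" using \<open>nu * t * s = 1\<close> by simp
      have "Ge y = (nu * \<alpha>^2) ^ e + (nu * \<gamma>^2) ^ e"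
        unfolding Ge_def by (subst 2(1), subst 2(2), rule refl)
      also have "\<dots> = - \<mu> * (\<alpha>^(p+1) + \<gamma>^(p+1))" using ntsm[of \<alpha>] ntsm[of \<gamma>] by (simp add: algebra_simps)
      finally have g: "Ge y = - \<mu> * (\<alpha>^(p+1) + \<gamma>^(p+1))" .
      have h2: "2 * Ge y = - \<mu> * (2 * (\<alpha>^(p+1) + \<gamma>^(p+1)))" unfolding g by (simp add: algebra_simps)
      have "2 * Ge y = - \<mu> * (t ^ (p + 1) + s ^ (p + 1))" unfolding tps by (rule h2)
      then show "2 * Ge y = - \<mu> * t ^ (p + 1) + - \<mu> * s ^ (p + 1)"
        by (simp add: algebra_simps)
      have ud: "(- \<mu> * x ^ (p + 1)) ^ d = nu * x^2" for x
      proof -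
        have "(- \<mu> * x ^ (p + 1)) ^ d = - (\<mu> ^ d) * (x ^ (p + 1)) ^ d"
          using odd_d by (simp add: power_mult_distrib power_minus_odd)
        also have "\<dots> = nu * x^2" using td nu_hd \<mu>_def by simp
        finally show ?thesis .
      qed
      have "(- \<mu> * t ^ (p + 1)) ^ d + (- \<mu> * s ^ (p + 1)) ^ d = nu * t^2 + nu * s^2" by (simp only: ud)
      also have "\<dots> = nu * (t^2 + s^2)" by (simp add: algebra_simps)
      also have "\<dots> = nu * (2 * (\<alpha>^2 + \<gamma>^2))" by (simp only: ts2)
      also have "\<dots> = 2 * (nu * \<alpha>^2) + 2 * (nu * \<gamma>^2)" by (simp add: algebra_simps)
      also have "\<dots> = 2 * (y + 1) + 2 * y" by (simp only: 2(1)[symmetric] 2(2)[symmetric])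
      also have "\<dots> = 4 * y + 2" by (simp add: algebra_simps)
      finally show "(- \<mu> * t ^ (p + 1)) ^ d + (- \<mu> * s ^ (p + 1)) ^ d = 4 * y + 2" .
    qed
    then show ?thesis by blast
  next
    case 3
    have "MW y \<alpha> \<gamma> 1" unfolding MW_def
    proof (intro conjI)
      show "Ge y = CC \<alpha> \<gamma>" using 3 ntsm[of \<gamma>] unfolding Ge_def CC_def \<mu>_def by (simp add: sq_e)
    qed (use 3 in \<open>simp_all add: algebra_simps\<close>)
    then show ?thesis by blast
  next
    case 4
    have "MW y \<gamma> \<alpha> (-1)" unfolding MW_def
    proof (intro conjI)
      show "Ge y = CC \<gamma> \<alpha>" using 4 ntsm[of \<alpha>] unfolding Ge_def CC_def \<mu>_def by (simp add: sq_e)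
    qed (use 4 in \<open>simp_all add: algebra_simps\<close>)
    then show ?thesis by blast
  qed
qed

end


context ctx
begin

lemma pp:
  assumes "PW y1 U1 V1" "PW y2 U2 V2" "Ge y1 = Ge y2"
  shows "y1 = y2"
proof -
  have u1: "U1 * V1 = 1" and s1: "2 * Ge y1 = U1 + V1" and d1: "U1 ^ d + V1 ^ d = 4 * y1 + 2"
    using assms(1) unfolding PW_def by auto
  have u2: "U2 * V2 = 1" and s2: "2 * Ge y2 = U2 + V2" and d2: "U2 ^ d + V2 ^ d = 4 * y2 + 2"
    using assms(2) unfolding PW_def by auto
  have sum: "U1 + V1 = U2 + V2" using s1 s2 assms(3) by simp
  have "(U2 - U1) * (U2 - V1) = U2 * U2 - U2 * (U1 + V1) + U1 * V1" by (simp add: algebra_simps)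
  also have "\<dots> = U2 * U2 - U2 * (U2 + V2) + 1" using sum u1 by simp
  also have "\<dots> = 0" using u2 by (simp add: algebra_simps)
  finally have "U2 = U1 \<or> U2 = V1" by simp
  then have "U2 ^ d + V2 ^ d = U1 ^ d + V1 ^ d"
  proof
    assume "U2 = U1" then have "V2 = V1" using sum by simp
    then show ?thesis using \<open>U2 = U1\<close> by simp
  next
    assume "U2 = V1" then have "V2 = U1" using sum by simp
    then show ?thesis using \<open>U2 = V1\<close> by simp
  qed
  then have "4 * y1 + 2 = 4 * y2 + 2" using d1 d2 by metis
  then have "4 * y1 = 4 * y2" by simp
  then show ?thesis using four_ne0 mult_cancel_left by blast
qed

lemma mixed_zero:
  assumes "MW y a b \<epsilon>" "WW a b = 0"
  shows "4 * y + 2 = 2 * Ge y"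
proof -
  have e2: "\<epsilon>^2 = 1" and n: "a^2 - nu * b^2 = \<epsilon>" and s: "a^2 + nu * b^2 = 2 * y + 1" and g: "Ge y = CC a b"
    using assms(1) unfolding MW_def by auto
  note R = mixed_rel[OF n e2]
  define c where "c = CC a b"
  have c2: "c^2 = 1" using R(3) assms(2) c_def by simp
  have r1: "a ^ p = (\<epsilon> * c) * a" using R(1) assms(2) c_def by (simp add: mult_ac)
  have r2: "nu ^ k * b ^ p = (\<epsilon> * c) * b" using R(2) assms(2) c_def by (simp add: mult_ac)
  have d2: "(\<epsilon> * c)^2 = 1" using e2 c2 by (simp add: power_mult_distrib)
  have pp1: "x ^ p = x ^ (p - 1) * x" for x :: 'a
    using p_ge3 by (metis Suc_diff_1 less_le_trans zero_less_numeral power_Suc2 less_numeral_extra(1) numeral_le_iff order.strict_trans1)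
  have ab: "a = 0 \<or> b = 0"
  proof (rule ccontr)
    assume "\<not> (a = 0 \<or> b = 0)"
    then have a0: "a \<noteq> 0" and b0: "b \<noteq> 0" by auto
    have "a ^ (p - 1) = \<epsilon> * c" using r1 pp1[of a] a0 by simp
    then have "\<epsilon> * c = 1" using L1[OF a0 _ d2] by simp
    have "nu ^ k * b ^ (p - 1) = \<epsilon> * c" using r2 pp1[of b] b0 by (simp add: mult_ac)
    then have "\<epsilon> * c = -1" using L2[OF b0 _ d2] by simp
    with \<open>\<epsilon> * c = 1\<close> neg1_ne1 show False by simp
  qed
  have "(2 * y + 1)^2 = (a^2 - nu * b^2)^2 + 4 * nu * (a * b)^2"
    unfolding s[symmetric] by (simp add: algebra_simps power2_eq_square)
  also have "\<dots> = 1" using ab n e2 by auto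
  finally have h: "(2 * y + 1)^2 = 1" .
  have "(2 * y) * (2 * y + 2) = (2 * y + 1)^2 - 1" by (simp add: algebra_simps power2_eq_square)
  also have "\<dots> = 0" using h by simp
  finally have "2 * y = 0 \<or> 2 * y + 2 = 0" by (simp only: mult_eq_0_iff)
  then have "y = 0 \<or> y = -1"
  proof
    assume "2 * y = 0" then show ?thesis using two_ne0 by simp
  next
    assume "2 * y + 2 = 0"
    then have "2 * (y + 1) = 0" by (simp add: algebra_simps)
    then have "y + 1 = 0" using two_ne0 mult_eq_0_iff by blast
    then show ?thesis by (simp add: add_eq_0_iff2)
  qed
  then show ?thesis using Ge0 Gem1 by auto
qed

lemma pm:
  assumes "PW y1 U V" "MW y2 a b \<epsilon>" "Ge y1 = Ge y2"
  shows "y1 = y2"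
proof -
  have u1: "U * V = 1" and s1: "2 * Ge y1 = U + V" and d1: "U ^ d + V ^ d = 4 * y1 + 2"
    using assms(1) unfolding PW_def by auto
  have e2: "\<epsilon>^2 = 1" and n: "a^2 - nu * b^2 = \<epsilon>" and g: "Ge y2 = CC a b"
    using assms(2) unfolding MW_def by auto
  note R = mixed_rel[OF n e2]
  define c where "c = Ge y1"
  have sq: "(U - V)^2 = 4 * (c^2 - 1)"
  proof -
    have "(U - V)^2 = (U + V)^2 - 4 * (U * V)" by (simp add: algebra_simps power2_eq_square)
    also have "\<dots> = (2 * c)^2 - 4" using s1 u1 c_def by simp
    finally show ?thesis by (simp add: algebra_simps power2_eq_square)
  qed
  have m1: "c^2 - 1 = nu * (WW a b)^2" using R(3) g assms(3) c_def by (simp add: algebra_simps)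
  show ?thesis
  proof (cases "WW a b = 0")
    case False
    have "(U - V)^2 = 4 * (nu * (WW a b)^2)" by (simp only: sq m1)
    then have "(U - V)^2 = (2 * WW a b)^2 * nu" by (simp add: algebra_simps power2_eq_square)
    then have "nu = ((U - V) / (2 * WW a b))^2" using False two_ne0 four_ne0
      by (simp add: power_divide field_simps)
    then show ?thesis using nu_nsq by blast
  next
    case True
    have y2: "4 * y2 + 2 = 2 * Ge y2" using mixed_zero[OF assms(2) True] .
    have "c^2 = 1" using m1 True by simp
    then have "(U - V)^2 = 0" using sq by simp
    then have "U = V" by simp
    then have "U = c" using s1 c_def two_ne0 by (metis mult_2 mult_cancel_left)
    have "U^2 = 1" using \<open>c^2 = 1\<close> \<open>U = c\<close> by simp
    then have "U ^ d = U" using odd_pow_pm1 odd_d by blast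
    then have "4 * y1 + 2 = 2 * c" using d1 \<open>U = V\<close> \<open>U = c\<close> by simp
    then have "4 * y1 + 2 = 4 * y2 + 2" using y2 assms(3) c_def by simp
    then have "4 * y1 = 4 * y2" by simp
    then show ?thesis using four_ne0 mult_cancel_left by blast
  qed
qed

end


context ctx
begin

lemma pow_p_split: "(x::'a) ^ p = x ^ (p - 1) * x"
proof -
  have "p = Suc (p - 1)" using p_ge3 by simp
  then show ?thesis by (metis power_Suc2)
qed

lemma mm0:
  assumes A1: "MW y1 a1 b1 e1" and A2: "MW y2 a2 b2 e2" and G: "Ge y1 = Ge y2"
    and WE: "WW a1 b1 = WW a2 b2"
  shows "y1 = y2"
proof -
  have e1s: "e1^2 = 1" and n1: "a1^2 - nu * b1^2 = e1" and s1: "a1^2 + nu * b1^2 = 2 * y1 + 1"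
    and g1: "Ge y1 = CC a1 b1" using A1 unfolding MW_def by auto
  have e2s: "e2^2 = 1" and n2: "a2^2 - nu * b2^2 = e2" and s2: "a2^2 + nu * b2^2 = 2 * y2 + 1"
    and g2: "Ge y2 = CC a2 b2" using A2 unfolding MW_def by auto
  define C where "C = CC a1 b1"
  define W where "W = WW a1 b1"
  have C2: "CC a2 b2 = C" using g1 g2 G C_def by simp
  have W2: "WW a2 b2 = W" using WE W_def by simp
  note R1 = mixed_rel[OF n1 e1s, folded C_def W_def]
  note R2 = mixed_rel[OF n2 e2s, unfolded C2 W2]
  define u where "u = a2 * a1 - nu * b2 * b1"
  define v where "v = b2 * a1 - a2 * b1"
  define \<delta> where "\<delta> = e1 * e2"
  have up: "u ^ p = \<delta> * u"
  proof -
    have "u ^ p = (a2 * a1) ^ p - (nu * b2 * b1) ^ p" unfolding u_def by (rule frob_diff)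
    also have "\<dots> = a2 ^ p * a1 ^ p - nu * (nu ^ k * b2 ^ p) * (nu ^ k * b1 ^ p)"
      by (simp add: power_mult_distrib nu_p power2_eq_square mult_ac)
    also have "\<dots> = (e2 * (C * a2 + nu * W * b2)) * (e1 * (C * a1 + nu * W * b1))
        - nu * (e2 * (C * b2 + W * a2)) * (e1 * (C * b1 + W * a1))"
      by (simp only: R1(1) R1(2) R2(1) R2(2))
    also have "\<dots> = e1 * e2 * ((C^2 - nu * W^2) * u)"
      unfolding u_def by (simp add: algebra_simps power2_eq_square)
    finally show ?thesis using R1(3) \<delta>_def by simp
  qed
  have vp: "nu ^ k * v ^ p = \<delta> * v"
  proof -
    have "nu ^ k * v ^ p = nu ^ k * ((b2 * a1) ^ p - (a2 * b1) ^ p)" unfolding v_def by (simp add: frob_diff)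
    also have "\<dots> = (nu ^ k * b2 ^ p) * a1 ^ p - a2 ^ p * (nu ^ k * b1 ^ p)"
      by (simp add: power_mult_distrib algebra_simps)
    also have "\<dots> = (e2 * (C * b2 + W * a2)) * (e1 * (C * a1 + nu * W * b1))
        - (e2 * (C * a2 + nu * W * b2)) * (e1 * (C * b1 + W * a1))"
      by (simp only: R1(1) R1(2) R2(1) R2(2))
    also have "\<dots> = e1 * e2 * ((C^2 - nu * W^2) * v)"
      unfolding v_def by (simp add: algebra_simps power2_eq_square)
    finally show ?thesis using R1(3) \<delta>_def by simp
  qed
  have norm: "u^2 - nu * v^2 = \<delta>"
  proof -
    have "u^2 - nu * v^2 = (a2^2 - nu * b2^2) * (a1^2 - nu * b1^2)"
      unfolding u_def v_def by (simp add: algebra_simps power2_eq_square)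
    then show ?thesis using n1 n2 \<delta>_def by (simp add: mult.commute)
  qed
  have d2: "\<delta>^2 = 1" using e1s e2s \<delta>_def by (simp add: power_mult_distrib)
  have "(\<delta> - 1) * (\<delta> + 1) = 0" using d2 by (simp add: algebra_simps power2_eq_square)
  then have "\<delta> = 1 \<or> \<delta> = -1" by (simp add: add_eq_0_iff2)
  then show ?thesis
  proof
    assume d1: "\<delta> = 1"
    have v0: "v = 0"
    proof (rule ccontr)
      assume v: "v \<noteq> 0"
      have "nu ^ k * v ^ (p - 1) * v = 1 * v" using vp d1 pow_p_split[of v] by (simp add: mult_ac)
      then have "nu ^ k * v ^ (p - 1) = 1" using v by (metis mult_right_cancel)
      then have "(1::'a) = -1" using L2[OF v] by simp
      then show False using neg1_ne1 by simp
    qed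
    have e12: "e2 = e1"
    proof -
      have "e2 = e1 * e1 * e2" using e1s by (simp add: power2_eq_square)
      also have "\<dots> = e1" using d1 \<delta>_def by (simp add: mult.assoc)
      finally show ?thesis .
    qed
    have e1ne: "e1 \<noteq> 0" using e1s by auto
    have ba: "b2 * a1 = a2 * b1" using v0 v_def by simp
    have "a2^2 * (nu * b1^2) = a1^2 * (nu * b2^2)"
    proof -
      have "a2^2 * (nu * b1^2) = nu * (a2 * b1)^2" by (simp add: algebra_simps power2_eq_square)
      also have "\<dots> = nu * (b2 * a1)^2" using ba by simp
      also have "\<dots> = a1^2 * (nu * b2^2)" by (simp add: algebra_simps power2_eq_square)
      finally show ?thesis .
    qed
    moreover have "nu * b1^2 = a1^2 - e1" unfolding n1[symmetric] by simp
    moreover have "nu * b2^2 = a2^2 - e1" unfolding e12[symmetric] n2[symmetric] by simp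
    ultimately have "a2^2 * (a1^2 - e1) = a1^2 * (a2^2 - e1)" by simp
    then have "e1 * (a1^2 - a2^2) = 0" by (simp add: algebra_simps)
    then have "a1^2 = a2^2" using e1ne by simp
    have "2 * y1 + 1 = 2 * a1^2 - e1" using s1 n1 by (simp add: algebra_simps)
    moreover have "2 * y2 + 1 = 2 * a2^2 - e1" using s2 n2 e12 by (simp add: algebra_simps)
    ultimately have "2 * y1 + 1 = 2 * y2 + 1" using \<open>a1^2 = a2^2\<close> by simp
    then have "2 * y1 = 2 * y2" by (rule add_right_imp_eq)
    then show ?thesis using two_ne0 mult_cancel_left by blast
  next
    assume d1: "\<delta> = -1"
    have u0: "u = 0"
    proof (rule ccontr)
      assume u: "u \<noteq> 0"
      have "u ^ (p - 1) * u = (-1) * u" using up d1 pow_p_split[of u] by simp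
      then have "u ^ (p - 1) = -1" using u by (metis mult_right_cancel)
      then have "(-1::'a) = 1" using L1[OF u] by simp
      then show False using neg1_ne1 by simp
    qed
    have "nu * v^2 = 1" using norm u0 d1 by simp
    then have "v \<noteq> 0" by auto
    then have "nu = (1 / v)^2" using \<open>nu * v^2 = 1\<close> by (simp add: power_divide field_simps)
    then show ?thesis using nu_nsq by blast
  qed
qed


end


context ctx
begin

lemma mm:
  assumes A1: "MW y1 a1 b1 e1" and A2: "MW y2 a2 b2 e2" and G: "Ge y1 = Ge y2"
  shows "y1 = y2"
proof -
  have e1s: "e1^2 = 1" and n1: "a1^2 - nu * b1^2 = e1" and g1: "Ge y1 = CC a1 b1"
    using A1 unfolding MW_def by auto
  have e2s: "e2^2 = 1" and n2: "a2^2 - nu * b2^2 = e2" and g2: "Ge y2 = CC a2 b2"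
    using A2 unfolding MW_def by auto
  have "nu * (WW a1 b1)^2 = nu * (WW a2 b2)^2"
    using mixed_rel(3)[OF n1 e1s] mixed_rel(3)[OF n2 e2s] g1 g2 G by (simp add: algebra_simps)
  then have "(WW a1 b1)^2 = (WW a2 b2)^2" using nu_ne0 by simp
  then have "WW a2 b2 = WW a1 b1 \<or> WW a2 b2 = - WW a1 b1" by (auto simp: power2_eq_iff)
  then show ?thesis
  proof
    assume "WW a2 b2 = WW a1 b1"
    then show ?thesis using mm0[OF A1 A2 G] by simp
  next
    assume h: "WW a2 b2 = - WW a1 b1"
    have ev: "even (p + 1)" using odd_p by simp
    have A2': "MW y2 a2 (- b2) e2"
      using A2 ev unfolding MW_def CC_def by simp
    have "WW a2 (- b2) = - WW a2 b2" unfolding WW_def by (simp add: frob_neg)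
    then have "WW a1 b1 = WW a2 (- b2)" using h by simp
    then show ?thesis using mm0[OF A1 A2' G] by simp
  qed
qed

lemma Ge_inj:
  assumes G: "Ge y1 = Ge y2"
  shows "y1 = y2"
proof -
  from witness[of y1] show ?thesis
  proof
    assume "\<exists>U V. PW y1 U V"
    then obtain U1 V1 where P1: "PW y1 U1 V1" by blast
    from witness[of y2] show ?thesis
    proof
      assume "\<exists>U V. PW y2 U V"
      then obtain U2 V2 where P2: "PW y2 U2 V2" by blast
      show ?thesis by (rule pp[OF P1 P2 G])
    next
      assume "\<exists>a b \<epsilon>. MW y2 a b \<epsilon>"
      then obtain a b \<epsilon> where M2: "MW y2 a b \<epsilon>" by blast
      show ?thesis by (rule pm[OF P1 M2 G])
    qed
  next
    assume "\<exists>a b \<epsilon>. MW y1 a b \<epsilon>"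
    then obtain a1 b1 e1 where M1: "MW y1 a1 b1 e1" by blast
    from witness[of y2] show ?thesis
    proof
      assume "\<exists>U V. PW y2 U V"
      then obtain U2 V2 where P2: "PW y2 U2 V2" by blast
      have "y2 = y1" by (rule pm[OF P2 M1 G[symmetric]])
      then show ?thesis by simp
    next
      assume "\<exists>a b \<epsilon>. MW y2 a b \<epsilon>"
      then obtain a b \<epsilon> where M2: "MW y2 a b \<epsilon>" by blast
      show ?thesis by (rule mm[OF M1 M2 G])
    qed
  qed
qed


end


context ctx
begin

lemma Gd_inj:
  assumes "(z1 + 1) ^ d + z1 ^ d = (z2 + 1) ^ d + (z2::'a) ^ d"
  shows "z1 = z2"
proof (cases "(z1 + 1) ^ d + z1 ^ d = 0")
  case True
  have key: "z + 1 = - z" if "(z + 1) ^ d + z ^ d = 0" for z :: 'a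
  proof -
    have "(z + 1) ^ d = - (z ^ d)" using that by (simp add: eq_neg_iff_add_eq_0)
    also have "\<dots> = (- z) ^ d" using odd_d by (simp add: power_minus_odd)
    finally show ?thesis by (rule pow_d_inj)
  qed
  have zz: "z + z = -1" if h: "z + 1 = - z" for z :: 'a
  proof -
    have "z + (z + 1) = 0" unfolding h by (rule add.right_inverse)
    then have "(z + z) + 1 = 0" by (simp only: add.assoc)
    then show ?thesis by (simp only: add_eq_0_iff2)
  qed
  have h1: "z1 + 1 = - z1" using True by (rule key)
  have "(z2 + 1) ^ d + z2 ^ d = 0" by (simp only: assms[symmetric] True)
  then have h2: "z2 + 1 = - z2" by (rule key)
  have "z1 + z1 = z2 + z2" using zz[OF h1] zz[OF h2] by (simp only:)
  then have "2 * z1 = 2 * z2" by (simp only: mult_2)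
  then show ?thesis using two_ne0 mult_cancel_left by blast
next
  case False
  define b where "b = (z1 + 1) ^ d + z1 ^ d"
  have b0: "b \<noteq> 0" using False b_def by simp
  have key: "Ge (- (z ^ d) / b) = 1 / b ^ e" if "(z + 1) ^ d + z ^ d = b" for z :: 'a
  proof -
    have "- (z ^ d) / b + 1 = (z + 1) ^ d / b" using that b0 by (simp add: field_simps)
    then have "Ge (- (z ^ d) / b) = ((z + 1) ^ d / b) ^ e + (- (z ^ d) / b) ^ e" unfolding Ge_def by simp
    also have "\<dots> = ((z + 1) ^ d) ^ e / b ^ e + (- (z ^ d)) ^ e / b ^ e"
      by (simp only: power_divide)
    also have "\<dots> = (z + 1) / b ^ e + (- z) / b ^ e"
      by (simp only: pow_de power_minus_odd[OF odd_e])
    also have "\<dots> = (z + 1) / b ^ e - z / b ^ e" by simp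
    also have "\<dots> = 1 / b ^ e" by (simp add: diff_divide_distrib[symmetric])
    finally show ?thesis .
  qed
  have k1: "Ge (- (z1 ^ d) / b) = 1 / b ^ e" by (rule key) (simp only: b_def)
  have k2: "Ge (- (z2 ^ d) / b) = 1 / b ^ e" by (rule key) (simp only: b_def assms)
  have "Ge (- (z1 ^ d) / b) = Ge (- (z2 ^ d) / b)" using k1 k2 by simp
  then have "- (z1 ^ d) / b = - (z2 ^ d) / b" by (rule Ge_inj)
  then have "z1 ^ d = z2 ^ d" using b0 by (simp add: divide_cancel_right)
  then show ?thesis by (rule pow_d_inj)
qed

lemma phi_inj:
  assumes "(x1 + a) ^ d + x1 ^ d = (x2 + a) ^ d + (x2::'a) ^ d"
  shows "x1 = x2"
proof (cases "a = 0")
  case True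
  then have "x1 ^ d + x1 ^ d = x2 ^ d + x2 ^ d" using assms by simp
  then have "2 * x1 ^ d = 2 * x2 ^ d" by (simp only: mult_2)
  then have "x1 ^ d = x2 ^ d" using two_ne0 mult_cancel_left by blast
  then show ?thesis by (rule pow_d_inj)
next
  case False
  have sc: "(x + a) ^ d + x ^ d = a ^ d * ((x / a + 1) ^ d + (x / a) ^ d)" for x
  proof -
    have h1: "x + a = a * (x / a + 1)" using False by (simp add: field_simps)
    have h2: "x = a * (x / a)" using False by simp
    have "(x + a) ^ d + x ^ d = (a * (x / a + 1)) ^ d + (a * (x / a)) ^ d"
      by (subst h1, subst (2) h2, rule refl)
    also have "\<dots> = a ^ d * (x / a + 1) ^ d + a ^ d * (x / a) ^ d"
      by (simp only: power_mult_distrib)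
    also have "\<dots> = a ^ d * ((x / a + 1) ^ d + (x / a) ^ d)"
      by (rule distrib_left[symmetric])
    finally show ?thesis .
  qed
  have "a ^ d \<noteq> 0" using False by simp
  have "a ^ d * ((x1 / a + 1) ^ d + (x1 / a) ^ d) = a ^ d * ((x2 / a + 1) ^ d + (x2 / a) ^ d)"
    using assms unfolding sc .
  then have "(x1 / a + 1) ^ d + (x1 / a) ^ d = (x2 / a + 1) ^ d + (x2 / a) ^ d"
    using \<open>a ^ d \<noteq> 0\<close> mult_cancel_left by blast
  then have "x1 / a = x2 / a" by (rule Gd_inj)
  then show ?thesis using False by (simp add: divide_cancel_right)
qed

end


theorem mainTheorem5:
  fixes p n :: nat and F :: "'a::{field,finite} \<Rightarrow> 'a"
  assumes "prime p" and "odd p" and "odd n" and "n > 0"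
    and "card (UNIV :: 'a set) = p ^ n"
    and "F = (\<lambda>x. x ^ ((p ^ n + 1) div (p + 1)))"
  shows "perfect_c_nonlinear F (-1)"
proof -
  interpret ctx p n "TYPE('a)"
    by unfold_locales (use assms in auto)
  have Fd: "F = (\<lambda>x. x ^ d)" using assms(6) unfolding d_def q_def by simp
  define S where "S = {c_diff_count F (-1) a b | a b. (-1::'a) = 1 \<longrightarrow> a \<noteq> 0}"
  have le1: "c_diff_count F (-1) a b \<le> 1" for a b
  proof -
    have eq: "{x. F (x + a) - (-1) * F x = b} = {x. (x + a) ^ d + x ^ d = b}" using Fd by simp
    have "card {x::'a. (x + a) ^ d + x ^ d = b} \<le> Suc 0"
    proof (subst card_le_Suc0_iff_eq)
      show "\<forall>x\<in>{x::'a. (x + a) ^ d + x ^ d = b}. \<forall>y\<in>{x::'a. (x + a) ^ d + x ^ d = b}. x = y"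
      proof (intro ballI)
        fix x y assume "x \<in> {x::'a. (x + a) ^ d + x ^ d = b}" "y \<in> {x::'a. (x + a) ^ d + x ^ d = b}"
        then have "(x + a) ^ d + x ^ d = (y + a) ^ d + y ^ d" by simp
        then show "x = y" by (rule phi_inj)
      qed
    qed simp
    then show ?thesis unfolding c_diff_count_def eq by simp
  qed
  have one: "c_diff_count F (-1) 0 0 = 1"
  proof -
    have d0: "d \<noteq> 0" using odd_pos[OF odd_d] by simp
    have iff: "F (x + 0) - (-1) * F x = 0 \<longleftrightarrow> x = 0" for x :: 'a
    proof
      assume "F (x + 0) - (-1) * F x = 0"
      then have "x ^ d + x ^ d = 0" using Fd by simp
      then have "2 * x ^ d = 0" by (simp only: mult_2)
      then have "x ^ d = 0 ^ d" using two_ne0 d0 by simp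
      then show "x = 0" by (rule pow_d_inj)
    next
      assume "x = 0"
      then show "F (x + 0) - (-1) * F x = 0" using Fd d0 by simp
    qed
    have "{x. F (x + 0) - (-1) * F x = 0} = {0::'a}" using iff by auto
    then show ?thesis unfolding c_diff_count_def by simp
  qed
  have "1 \<in> S" unfolding S_def using one neg1_ne1 by (metis (mono_tags, lifting) mem_Collect_eq)
  have sub: "S \<subseteq> {..1}" unfolding S_def using le1 by auto
  then have fin: "finite S" by (rule finite_subset) simp
  have "Max S = 1"
    by (rule Max_eqI[OF fin]) (use sub \<open>1 \<in> S\<close> in auto)
  then show ?thesis unfolding perfect_c_nonlinear_def c_diff_uniformity_def S_def .
qed


end
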